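(* For each $\eta\in(0,\pi/3)$, $f_1(\mathrm{co}(V))\cup f_2(\mathrm{co}(V))\subset\mathrm{co}(V)$, where $V=\{b_0\}\cup\{z_k:k\ge0\}\cup\{w_k:k\ge1\}$.
   Context: For $\eta\in(0,\pi/3)$ let $a=\frac{e^{-i\eta}}{2\cos\eta}$, $f_1(z)=az$, $f_2(z)=1-\bar az$, $c=\frac{1}{1-|a|^4}$, and for integers $k\ge0$ put $z_k=ca^{k+1}$, $w_k=1-c|a|^2a^k$, $b_k=a+c|a|^4a^k$. $\mathrm{co}$ denotes convex hull. *)

theory Defs
  imports "HOL-Analysis.Analysis"
begin

definition a_par :: "real \<Rightarrow> complex" where
  "a_par \<eta> = exp (- \<i> * complex_of_real \<eta>) / complex_of_real (2 * cos \<eta>)"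

definition f1 :: "real \<Rightarrow> complex \<Rightarrow> complex" where
  "f1 \<eta> z = a_par \<eta> * z"

definition f2 :: "real \<Rightarrow> complex \<Rightarrow> complex" where
  "f2 \<eta> z = 1 - cnj (a_par \<eta>) * z"

definition c_par :: "real \<Rightarrow> real" where
  "c_par \<eta> = 1 / (1 - cmod (a_par \<eta>) ^ 4)"

definition zk :: "real \<Rightarrow> nat \<Rightarrow> complex" where
  "zk \<eta> k = complex_of_real (c_par \<eta>) * a_par \<eta> ^ (k + 1)"

definition wk :: "real \<Rightarrow> nat \<Rightarrow> complex" where
  "wk \<eta> k = 1 - complex_of_real (c_par \<eta> * cmod (a_par \<eta>) ^ 2) * a_par \<eta> ^ k"

definition bk :: "real \<Rightarrow> nat \<Rightarrow> complex" where
  "bk \<eta> k = a_par \<eta> + complex_of_real (c_par \<eta> * cmod (a_par \<eta>) ^ 4) * a_par \<eta> ^ k"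

definition Vset :: "real \<Rightarrow> complex set" where
  "Vset \<eta> = {bk \<eta> 0} \<union> {zk \<eta> k | k. k \<ge> 0} \<union> {wk \<eta> k | k. k \<ge> 1}"

end

theory Submission
  imports Defs
begin

fun Gs :: "real \<Rightarrow> nat \<Rightarrow> real" where
  "Gs r 0 = 0"
| "Gs r (Suc 0) = 1"
| "Gs r (Suc (Suc n)) = Gs r (Suc n) - r * Gs r n"

definition Tm :: "real \<Rightarrow> real \<times> real \<Rightarrow> real \<times> real" where
  "Tm r v = (snd v, snd v - r * fst v)"

lemma Tm_linear: "linear (Tm r)"
  by (rule linearI) (auto simp: Tm_def algebra_simps)

lemma seg_in_hull:
  assumes "x \<in> S" "y \<in> S" "0 \<le> u" "u \<le> 1"
  shows "u *\<^sub>R x + (1 - u) *\<^sub>R y \<in> convex hull S"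
  by (rule convexD[OF convex_convex_hull]) (use assms hull_subset[of S convex] in auto)

lemma tri_in_hull:
  assumes "x \<in> S" "y \<in> S" "z \<in> S" "0 \<le> u" "0 \<le> v" "0 \<le> w" "u + v + w = 1"
  shows "u *\<^sub>R x + v *\<^sub>R y + w *\<^sub>R z \<in> convex hull S"
proof -
  have "u *\<^sub>R x + v *\<^sub>R y + w *\<^sub>R z \<in> convex hull {x, y, z}"
    unfolding convex_hull_3 using assms by blast
  moreover have "convex hull {x, y, z} \<subseteq> convex hull S"
    by (rule hull_mono) (use assms in auto)
  ultimately show ?thesis by blast
qed

lemma hull_invariant:
  assumes "\<And>s. s \<in> S \<Longrightarrow> Tm r s \<in> convex hull S"
  shows "x \<in> convex hull S \<Longrightarrow> Tm r x \<in> convex hull S"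
proof -
  have "convex hull S \<subseteq> Tm r -` (convex hull S)"
    by (rule hull_minimal) (use assms convex_linear_vimage[OF Tm_linear convex_convex_hull] in auto)
  then show "x \<in> convex hull S \<Longrightarrow> Tm r x \<in> convex hull S" by blast
qed

lemma Tm_G: "Tm r (Gs r n, Gs r (Suc n)) = (Gs r (Suc n), Gs r (Suc (Suc n)))"
  by (simp add: Tm_def)

lemma G_in_hull:
  assumes "\<And>s. s \<in> S \<Longrightarrow> Tm r s \<in> convex hull S" "(0, 1) \<in> convex hull S"
  shows "(Gs r n, Gs r (Suc n)) \<in> convex hull S"
proof (induction n)
  case 0
  then show ?case using assms(2) by simp
next
  case (Suc n)
  have "Tm r (Gs r n, Gs r (Suc n)) \<in> convex hull S"
    by (rule hull_invariant[OF assms(1)]) (use Suc in auto)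
  then show ?case by (simp add: Tm_G)
qed

lemma box_hull:
  fixes S :: "(real \<times> real) set" and lo hi :: real
  assumes "\<And>s. s \<in> S \<Longrightarrow> lo \<le> fst s \<and> fst s \<le> hi" "x \<in> convex hull S"
  shows "lo \<le> fst x \<and> fst x \<le> hi"
proof -
  have cv: "convex {s::real\<times>real. lo \<le> fst s \<and> fst s \<le> hi}"
  proof (rule convexI)
    fix x y :: "real \<times> real" and u v :: real
    assume h: "x \<in> {s. lo \<le> fst s \<and> fst s \<le> hi}" "y \<in> {s. lo \<le> fst s \<and> fst s \<le> hi}"
      "0 \<le> u" "0 \<le> v" "u + v = 1"
    have "u * lo + v * lo \<le> u * fst x + v * fst y"
      using h by (intro add_mono mult_left_mono) auto
    moreover have "u * fst x + v * fst y \<le> u * hi + v * hi"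
      using h by (intro add_mono mult_left_mono) auto
    ultimately show "u *\<^sub>R x + v *\<^sub>R y \<in> {s. lo \<le> fst s \<and> fst s \<le> hi}"
      using h(5) by (simp add: distrib_right[symmetric])
  qed
  have "convex hull S \<subseteq> {s. lo \<le> fst s \<and> fst s \<le> hi}"
    by (rule hull_minimal) (use assms(1) cv in auto)
  then show ?thesis using assms(2) by blast
qed

lemma seg_eq:
  assumes "x \<in> S" "y \<in> S" "0 \<le> u" "u \<le> 1" "p = u *\<^sub>R x + (1 - u) *\<^sub>R y"
  shows "p \<in> convex hull S"
  using seg_in_hull[OF assms(1-4)] assms(5) by simp

lemma seg_eq2:
  assumes "x \<in> S" "y \<in> S" "0 \<le> u" "0 \<le> v" "u + v = 1" "p = u *\<^sub>R x + v *\<^sub>R y"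
  shows "p \<in> convex hull S"
proof -
  have "u \<le> 1" "v = 1 - u" using assms by linarith+
  then show ?thesis using seg_in_hull[OF assms(1,2,3)] assms(6) by simp
qed

lemma seg_den:
  fixes p x y :: "'a::real_vector"
  assumes "x \<in> S" "y \<in> S" "0 < D" "0 \<le> U" "0 \<le> V" "U + V = D"
    "D *\<^sub>R p = U *\<^sub>R x + V *\<^sub>R y"
  shows "p \<in> convex hull S"
proof (rule seg_eq2[OF assms(1,2), of "U/D" "V/D"])
  show "0 \<le> U/D" "0 \<le> V/D" using assms by auto
  show "U/D + V/D = 1" using assms by (simp add: add_divide_distrib[symmetric])
  have "p = (1/D) *\<^sub>R (D *\<^sub>R p)" using assms(3) by simp
  also have "\<dots> = (U/D) *\<^sub>R x + (V/D) *\<^sub>R y" using assms(7) by (simp add: scaleR_add_right)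
  finally show "p = (U/D) *\<^sub>R x + (V/D) *\<^sub>R y" .
qed

lemma tri_den:
  fixes p x y z :: "'a::real_vector"
  assumes "x \<in> S" "y \<in> S" "z \<in> S" "0 < D" "0 \<le> U" "0 \<le> V" "0 \<le> W" "U + V + W = D"
    "D *\<^sub>R p = U *\<^sub>R x + V *\<^sub>R y + W *\<^sub>R z"
  shows "p \<in> convex hull S"
proof -
  have "(U/D) *\<^sub>R x + (V/D) *\<^sub>R y + (W/D) *\<^sub>R z \<in> convex hull S"
  proof (rule tri_in_hull[OF assms(1,2,3)])
    show "0 \<le> U/D" "0 \<le> V/D" "0 \<le> W/D" using assms by auto
    show "U/D + V/D + W/D = 1" using assms by (simp add: add_divide_distrib[symmetric])
  qed
  moreover have "p = (1/D) *\<^sub>R (D *\<^sub>R p)" using assms(4) by simp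
  moreover have "(1/D) *\<^sub>R (D *\<^sub>R p) = (U/D) *\<^sub>R x + (V/D) *\<^sub>R y + (W/D) *\<^sub>R z"
    using assms(9) by (simp add: scaleR_add_right)
  ultimately show ?thesis by simp
qed

lemma G_bounds_A:
  assumes r0: "0 \<le> r" and r1: "r \<le> 11/20"
  shows "- r \<le> Gs r n \<and> Gs r n \<le> 2 - r"
proof -
  define S where "S = {(-r,-r), (0,-r), (1,0), (2-r,r), (2-r,2-r), (0,2-r), (-r,2-r-r^2)}"
  have rr: "r^2 \<le> r" using r0 r1 by (simp add: power2_eq_square mult_left_le_one_le)
  have d1: "2 - r^2 > 0" using rr r1 by linarith
  have q: "r^2 - 4*r + 2 \<ge> 0"
  proof -
    have "(29/20)^2 \<le> (2-r)^2" by (rule power_mono) (use r1 in auto)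
    then show ?thesis by (simp add: power2_eq_square algebra_simps)
  qed
  have mem: "(-r,-r) \<in> S" "(0,-r) \<in> S" "(1,0) \<in> S" "(2-r,r) \<in> S" "(2-r,2-r) \<in> S"
      "(0,2-r) \<in> S" "(-r,2-r-r^2) \<in> S" by (auto simp: S_def)
  have "\<And>s. s \<in> S \<Longrightarrow> Tm r s \<in> convex hull S"
  proof -
    fix s assume "s \<in> S"
    then consider "s = (-r,-r)" | "s = (0,-r)" | "s = (1,0)" | "s = (2-r,r)" | "s = (2-r,2-r)"
      | "s = (0,2-r)" | "s = (-r,2-r-r^2)" unfolding S_def insert_iff empty_iff by (elim disjE) (simp_all only:)
    then show "Tm r s \<in> convex hull S"
    proof cases
      case 1
      show ?thesis
      proof (rule seg_den[OF mem(1) mem(7) d1, of "2 - 2*r^2" "r^2"])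
        show "0 \<le> 2 - 2*r^2" "0 \<le> r^2" using rr r1 by auto
        show "2 - 2 * r\<^sup>2 + r\<^sup>2 = 2 - r\<^sup>2" by simp
        show "(2 - r\<^sup>2) *\<^sub>R Tm r s = (2 - 2 * r\<^sup>2) *\<^sub>R (- r, - r) + r\<^sup>2 *\<^sub>R (- r, 2 - r - r\<^sup>2)"
          by (simp add: Tm_def 1 prod_eq_iff power2_eq_square algebra_simps)
      qed
    next
      case 2
      have "Tm r s = (-r,-r)" by (simp add: Tm_def 2)
      moreover have "(-r,-r) \<in> convex hull S" by (rule hull_subset[THEN subsetD, OF mem(1)])
      ultimately show ?thesis by simp
    next
      case 3
      have "Tm r s = (0,-r)" by (simp add: Tm_def 3)
      moreover have "(0,-r) \<in> convex hull S" by (rule hull_subset[THEN subsetD, OF mem(2)])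
      ultimately show ?thesis by simp
    next
      case 4
      show ?thesis
      proof (rule seg_den[OF mem(2) mem(3), of 1 "1-r" r])
        show "0 \<le> 1 - r" "0 \<le> r" "(0::real) < 1" "1 - r + r = 1" using r0 r1 by auto
        show "1 *\<^sub>R Tm r s = (1 - r) *\<^sub>R (0, - r) + r *\<^sub>R (1, 0)"
          by (simp add: Tm_def 4 prod_eq_iff algebra_simps)
      qed
    next
      case 5
      show ?thesis
      proof (rule seg_den[OF mem(4) mem(5), of "2*(1-r)" "r*(2-r)" "r^2 - 4*r + 2"])
        show "0 \<le> r*(2-r)" using r0 r1 by simp
        show "0 < 2*(1-r)" "0 \<le> r^2 - 4*r + 2" using r1 q by auto
        show "r * (2 - r) + (r^2 - 4 * r + 2) = 2 * (1 - r)" by (simp add: power2_eq_square algebra_simps)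
        show "(2 * (1 - r)) *\<^sub>R Tm r s = (r * (2 - r)) *\<^sub>R (2 - r, r) + (r^2 - 4 * r + 2) *\<^sub>R (2 - r, 2 - r)"
          by (simp add: Tm_def 5 prod_eq_iff power2_eq_square algebra_simps)
      qed
    next
      case 6
      have "Tm r s = (2-r,2-r)" by (simp add: Tm_def 6)
      moreover have "(2-r,2-r) \<in> convex hull S" by (rule hull_subset[THEN subsetD, OF mem(5)])
      ultimately show ?thesis by simp
    next
      case 7
      show ?thesis
      proof (rule seg_den[OF mem(6) mem(5), of "2-r" "r^2" "2-r-r^2"])
        show "0 < 2 - r" "0 \<le> r^2" "0 \<le> 2 - r - r^2" "r^2 + (2 - r - r^2) = 2 - r" using r1 rr by auto
        show "(2 - r) *\<^sub>R Tm r s = r\<^sup>2 *\<^sub>R (0, 2 - r) + (2 - r - r\<^sup>2) *\<^sub>R (2 - r, 2 - r)"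
          by (simp add: Tm_def 7 prod_eq_iff power2_eq_square algebra_simps)
      qed
    qed
  qed
  moreover have "(0,1) \<in> convex hull S"
  proof (rule seg_den[OF mem(2) mem(6), of 2 "1-r" "1+r"])
    show "(0::real) < 2" "0 \<le> 1 - r" "0 \<le> 1 + r" "1 - r + (1 + r) = 2" using r0 r1 by auto
    show "2 *\<^sub>R (0::real, 1::real) = (1 - r) *\<^sub>R (0, - r) + (1 + r) *\<^sub>R (0, 2 - r)"
      by (simp add: prod_eq_iff algebra_simps)
  qed
  ultimately have "(Gs r n, Gs r (Suc n)) \<in> convex hull S" by (rule G_in_hull)
  moreover have "\<And>s. s \<in> S \<Longrightarrow> -r \<le> fst s \<and> fst s \<le> 2 - r"
    using r0 r1 by (auto simp: S_def)
  ultimately have "-r \<le> fst (Gs r n, Gs r (Suc n)) \<and> fst (Gs r n, Gs r (Suc n)) \<le> 2 - r"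
    using box_hull[of S "-r" "2-r" "(Gs r n, Gs r (Suc n))"] by blast
  then show ?thesis by simp
qed


lemma G_bounds_B:
  assumes r0: "11/20 \<le> r" and r1: "r \<le> 1"
  shows "- r \<le> Gs r n \<and> Gs r n \<le> 2 - r"
proof -
  define S where "S = {(0,1), (1,1), (1,1-r), (1-r,1-2*r), (1-2*r,1-3*r+r^2), (1-3*r+r^2,1-4*r+3*r^2)}"
  have rp: "0 \<le> r" using r0 by simp
  have rr: "r^2 \<le> r" using rp r1 by (simp add: power2_eq_square mult_left_le_one_le)
  have mem: "(0,1) \<in> S" "(1,1) \<in> S" "(1,1-r) \<in> S" "(1-r,1-2*r) \<in> S" "(1-2*r,1-3*r+r^2) \<in> S"
      "(1-3*r+r^2,1-4*r+3*r^2) \<in> S" by (auto simp: S_def)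
  have hm: "\<And>x. x \<in> S \<Longrightarrow> x \<in> convex hull S" by (rule hull_subset[THEN subsetD])
  have c3: "r^3 + r^2 + r - 1 \<ge> 0"
  proof -
    have "(11/20)^2 \<le> r^2" by (rule power_mono) (use r0 in auto)
    then have h2: "121/400 \<le> r^2" by (simp add: power_divide)
    have "(11/20)^3 \<le> r^3" by (rule power_mono) (use r0 in auto)
    then have h3: "1331/8000 \<le> r^3" by (simp add: power_divide)
    show ?thesis using r0 h2 h3 by linarith
  qed
  have c4: "r^3 - r + 1 \<ge> 0"
  proof -
    have "0 \<le> r^3" using rp by simp
    then show ?thesis using r1 by linarith
  qed
  have "\<And>s. s \<in> S \<Longrightarrow> Tm r s \<in> convex hull S"
  proof -
    fix s assume "s \<in> S"
    then consider "s = (0,1)" | "s = (1,1)" | "s = (1,1-r)" | "s = (1-r,1-2*r)"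
      | "s = (1-2*r,1-3*r+r^2)" | "s = (1-3*r+r^2,1-4*r+3*r^2)"
      unfolding S_def insert_iff empty_iff by (elim disjE) (simp_all only:)
    then show "Tm r s \<in> convex hull S"
    proof cases
      case 1
      have "Tm r s = (1,1)" by (simp add: Tm_def 1)
      then show ?thesis using hm[OF mem(2)] by simp
    next
      case 2
      have "Tm r s = (1,1-r)" by (simp add: Tm_def 2)
      then show ?thesis using hm[OF mem(3)] by simp
    next
      case 3
      have "Tm r s = (1-r,1-2*r)" by (simp add: Tm_def 3)
      then show ?thesis using hm[OF mem(4)] by simp
    next
      case 4
      have "Tm r s = (1-2*r,1-3*r+r^2)" by (simp add: Tm_def 4 power2_eq_square algebra_simps)
      then show ?thesis using hm[OF mem(5)] by simp
    next
      case 5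
      have "Tm r s = (1-3*r+r^2,1-4*r+3*r^2)" by (simp add: Tm_def 5 power2_eq_square algebra_simps)
      then show ?thesis using hm[OF mem(6)] by simp
    next
      case 6
      show ?thesis
      proof (rule tri_den[OF mem(1) mem(2) mem(6), of "4 - 3*r" "r*(r^3 - r + 1)" "(1-r)*(r^3+r^2+r-1)" "(1-r)*(5-r)"])
        show "0 < 4 - 3*r" using r1 by simp
        show "0 \<le> r*(r^3 - r + 1)" using rp c4 by simp
        show "0 \<le> (1-r)*(r^3+r^2+r-1)" using r1 c3 by simp
        show "0 \<le> (1-r)*(5-r)" using r1 by simp
        show "r*(r^3 - r + 1) + (1-r)*(r^3+r^2+r-1) + (1-r)*(5-r) = 4 - 3*r"
          by (simp add: power2_eq_square power3_eq_cube algebra_simps)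
        show "(4 - 3*r) *\<^sub>R Tm r s = (r*(r^3 - r + 1)) *\<^sub>R (0,1) + ((1-r)*(r^3+r^2+r-1)) *\<^sub>R (1,1)
            + ((1-r)*(5-r)) *\<^sub>R (1-3*r+r^2,1-4*r+3*r^2)"
          by (simp add: Tm_def 6 prod_eq_iff power2_eq_square power3_eq_cube algebra_simps)
      qed
    qed
  qed
  moreover have "(0,1) \<in> convex hull S" by (rule hm[OF mem(1)])
  ultimately have "(Gs r n, Gs r (Suc n)) \<in> convex hull S" by (rule G_in_hull)
  moreover have "\<And>s. s \<in> S \<Longrightarrow> -r \<le> fst s \<and> fst s \<le> 2 - r"
  proof -
    have "0 \<le> (1-r)^2" by simp
    then have a: "-r \<le> 1-3*r+r^2" by (simp add: power2_eq_square algebra_simps)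
    have b: "1-3*r+r^2 \<le> 2 - r" using rr rp by linarith
    fix s assume "s \<in> S" then show "-r \<le> fst s \<and> fst s \<le> 2 - r"
      unfolding S_def using a b rp r1 by auto
  qed
  ultimately have "-r \<le> fst (Gs r n, Gs r (Suc n)) \<and> fst (Gs r n, Gs r (Suc n)) \<le> 2 - r"
    using box_hull[of S "-r" "2-r" "(Gs r n, Gs r (Suc n))"] by blast
  then show ?thesis by simp
qed

lemma G_bounds:
  assumes "0 \<le> r" "r \<le> 1"
  shows "- r \<le> Gs r n \<and> Gs r n \<le> 2 - r"
proof (cases "r \<le> 11/20")
  case True then show ?thesis using G_bounds_A assms by blast
next
  case False then show ?thesis using G_bounds_B assms by simp
qed


lemma affine_hull_inv:
  fixes f :: "complex \<Rightarrow> complex"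
  assumes aff: "\<And>x y (u::real) v. u + v = 1 \<Longrightarrow> f (u *\<^sub>R x + v *\<^sub>R y) = u *\<^sub>R f x + v *\<^sub>R f y"
    and img: "\<And>v. v \<in> V \<Longrightarrow> f v \<in> convex hull V"
  shows "f ` (convex hull V) \<subseteq> convex hull V"
proof -
  have cv: "convex (f -` (convex hull V))"
  proof (rule convexI)
    fix x y and u v :: real
    assume h: "x \<in> f -` (convex hull V)" "y \<in> f -` (convex hull V)" "0 \<le> u" "0 \<le> v" "u + v = 1"
    have "u *\<^sub>R f x + v *\<^sub>R f y \<in> convex hull V"
      by (rule convexD[OF convex_convex_hull]) (use h in auto)
    then show "u *\<^sub>R x + v *\<^sub>R y \<in> f -` (convex hull V)"
      using aff[OF h(5), of x y] by simp
  qed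
  have "convex hull V \<subseteq> f -` (convex hull V)"
    by (rule hull_minimal) (use img cv in auto)
  then show ?thesis by blast
qed

lemma a_pow:
  fixes a :: complex
  assumes "a * a = a - of_real r"
  shows "a ^ Suc n = of_real (- r * Gs r n) + of_real (Gs r (Suc n)) * a"
proof (induction n)
  case 0
  then show ?case by simp
next
  case (Suc n)
  have "a ^ Suc (Suc n) = a * a ^ Suc n" by simp
  also have "\<dots> = a * (of_real (- r * Gs r n) + of_real (Gs r (Suc n)) * a)"
    by (simp only: Suc.IH)
  also have "\<dots> = of_real (- r * Gs r n) * a + of_real (Gs r (Suc n)) * (a * a)"
    by (simp add: algebra_simps)
  also have "\<dots> = of_real (- r * Gs r n) * a + of_real (Gs r (Suc n)) * (a - of_real r)"
    using assms by simp
  also have "\<dots> = of_real (- r * Gs r (Suc n)) + of_real (Gs r (Suc (Suc n))) * a"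
    by (simp add: algebra_simps)
  finally show ?case .
qed

definition lin :: "complex \<Rightarrow> real \<Rightarrow> real \<Rightarrow> complex" where
  "lin a x y = of_real x + of_real y * a"

lemma lin_comb3:
  assumes "D * X0 = U * X1 + V * X2 + W * X3" "D * Y0 = U * Y1 + V * Y2 + W * Y3"
  shows "D *\<^sub>R lin a X0 Y0 = U *\<^sub>R lin a X1 Y1 + V *\<^sub>R lin a X2 Y2 + W *\<^sub>R lin a X3 Y3"
proof -
  have "D *\<^sub>R lin a X0 Y0 = of_real (D * X0) + of_real (D * Y0) * a"
    by (simp add: lin_def scaleR_conv_of_real algebra_simps)
  also have "\<dots> = of_real (U * X1 + V * X2 + W * X3) + of_real (U * Y1 + V * Y2 + W * Y3) * a"
    using assms by simp
  also have "\<dots> = U *\<^sub>R lin a X1 Y1 + V *\<^sub>R lin a X2 Y2 + W *\<^sub>R lin a X3 Y3"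
    by (simp add: lin_def scaleR_conv_of_real algebra_simps)
  finally show ?thesis .
qed


lemma tri_lin:
  assumes "P1 \<in> S" "P2 \<in> S" "P3 \<in> S" "P1 = lin a X1 Y1" "P2 = lin a X2 Y2" "P3 = lin a X3 Y3"
    "t = lin a X0 Y0" "0 < D" "0 \<le> U" "0 \<le> V" "0 \<le> W" "U + V + W = D"
    "D * X0 = U * X1 + V * X2 + W * X3" "D * Y0 = U * Y1 + V * Y2 + W * Y3"
  shows "t \<in> convex hull S"
  using tri_den[OF assms(1-3) assms(8-12)] lin_comb3[OF assms(13,14)] assms(4-7) by simp

lemma main_abstract:
  fixes a :: complex and r c :: real
  assumes ha: "cnj a = 1 - a" and hr: "a * cnj a = of_real r"
    and r0: "0 < r" and r1: "r < 1" and hc: "c = 1 / (1 - r^2)"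
    and hV: "V = {a + of_real (c * r^2) * a^0} \<union> {of_real c * a^(k+1) | k. k \<ge> 0}
               \<union> {1 - of_real (c * r) * a^k | k. k \<ge> 1}"
  shows "(\<lambda>z. a * z) ` (convex hull V) \<union> (\<lambda>z. 1 - cnj a * z) ` (convex hull V) \<subseteq> convex hull V"
proof -
  have "a * (1 - a) = of_real r" using ha hr by simp
  then have aa: "a * a = a - of_real r" by (simp add: algebra_simps)
  have ca: "cnj a * a = of_real r" using hr by (simp add: mult.commute)
  have rr: "r^2 < 1"
  proof -
    have "r * r < 1 * 1" using r0 r1 by (intro mult_strict_mono) auto
    then show ?thesis by (simp add: power2_eq_square)
  qed
  have cne: "c * (1 - r^2) = 1" using rr hc by simp
  have cpos: "0 < c" using rr hc by simp
  have zin: "\<And>k. of_real c * a^(k+1) \<in> V" using hV by blast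
  have win: "\<And>k. k \<ge> 1 \<Longrightarrow> 1 - of_real (c*r) * a^k \<in> V" using hV by blast
  have bin: "a + of_real (c*r^2) \<in> V" using hV by simp
  have hm: "\<And>x. x \<in> V \<Longrightarrow> x \<in> convex hull V" by (rule hull_subset[THEN subsetD])
  have a2: "a^2 = a - of_real r" using aa by (simp add: power2_eq_square)
  have a3: "a^3 = of_real (1-r) * a - of_real r"
  proof -
    have "a^3 = a * (a * a)" by (simp add: power3_eq_cube)
    also have "\<dots> = a * (a - of_real r)" by (simp only: aa)
    also have "\<dots> = a * a - of_real r * a" by (simp add: algebra_simps)
    also have "\<dots> = (a - of_real r) - of_real r * a" by (simp only: aa)
    also have "\<dots> = of_real (1-r) * a - of_real r" by (simp add: algebra_simps)
    finally show ?thesis .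
  qed
  have Z0: "of_real c * a^(0+1) = lin a 0 c" by (simp add: lin_def)
  have Z1: "of_real c * a^(1+1) = lin a (-c*r) c"
  proof -
    have e: "a^(1+1) = a - of_real r" using a2 by (simp del: One_nat_def)
    show ?thesis by (simp only: e) (simp add: lin_def algebra_simps)
  qed
  have Z2: "of_real c * a^(2+1) = lin a (-c*r) (c*(1-r))"
  proof -
    have e: "a^(2+1) = of_real (1-r) * a - of_real r" using a3 by (simp del: One_nat_def)
    show ?thesis by (simp only: e) (simp add: lin_def algebra_simps)
  qed
  have W1: "1 - of_real (c*r) * a^1 = lin a 1 (-c*r)" by (simp add: lin_def)
  have W2: "1 - of_real (c*r) * a^2 = lin a (1 + c*r^2) (-c*r)"
    by (simp only: a2) (simp add: lin_def algebra_simps power2_eq_square)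
  have WK: "\<And>k. 1 - of_real (c*r) * a^(Suc k) = lin a (1 + c*r^2*Gs r k) (-c*r*Gs r (Suc k))"
    by (simp only: a_pow[OF aa]) (simp add: lin_def algebra_simps power2_eq_square)
  have Gb: "\<And>n. - r \<le> Gs r n \<and> Gs r n \<le> 2 - r" using G_bounds r0 r1 by simp
  have z0V: "lin a 0 c \<in> V" using zin[of 0] Z0 by simp
  have z1V: "lin a (-c*r) c \<in> V" using zin[of 1] Z1 by simp
  have z2V: "lin a (-c*r) (c*(1-r)) \<in> V" using zin[of 2] Z2 by simp
  have w1V: "lin a 1 (-c*r) \<in> V" using win[of 1] W1 by simp
  have w2V: "lin a (1 + c*r^2) (-c*r) \<in> V" using win[of 2] W2 by simp
  have w0H: "1 - of_real (c*r) \<in> convex hull V"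
  proof (rule tri_lin[OF w1V z1V z2V refl refl refl, of _ "1 - c*r" 0 "1 + r - r^2" "1 - r^2" "r*(1-r)" "r^2"])
    show "1 - complex_of_real (c * r) = lin a (1 - c * r) 0" by (simp add: lin_def)
    show "0 < 1 + r - r^2" "0 \<le> 1 - r^2" "0 \<le> r*(1-r)" "0 \<le> r^2" using rr r0 r1 by auto
    show "1 - r^2 + r * (1 - r) + r^2 = 1 + r - r^2" by (simp add: algebra_simps power2_eq_square)
    show "(1 + r - r\<^sup>2) * (1 - c * r) = (1 - r\<^sup>2) * 1 + r * (1 - r) * (- c * r) + r\<^sup>2 * (- c * r)"
      using cne by algebra
    show "(1 + r - r\<^sup>2) * 0 = (1 - r\<^sup>2) * (- c * r) + r * (1 - r) * c + r\<^sup>2 * (c * (1 - r))"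
      by algebra
  qed
  have tH: "a * (1 - of_real (c*r) * a^k) \<in> convex hull V" if "k \<ge> 1" for k
  proof -
    define p where "p = Gs r k"
    define q where "q = Gs r (Suc k)"
    have g2: "Gs r (Suc (Suc k)) = q - r * p" by (simp add: p_def q_def)
    have bp: "-r \<le> p" "p \<le> 2 - r" using Gb p_def by auto
    have bq: "-r \<le> q" "q \<le> 2 - r" using Gb q_def by auto
    have bg: "-r \<le> q - r*p" "q - r*p \<le> 2 - r" using Gb[of "Suc (Suc k)"] g2 by auto
    have wV: "lin a (1 + c*r^2*p) (-c*r*q) \<in> V"
      using win[of "Suc k"] WK[of k] by (simp add: p_def q_def)
    have teq: "a * (1 - of_real (c*r) * a^k) = lin a (c*r^2*p) (1 - c*r*q)"
    proof -
      have "a * (1 - of_real (c*r) * a^k) = a - of_real (c*r) * a^(Suc k)" by (simp add: algebra_simps)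
      also have "\<dots> = a - of_real (c*r) * (of_real (- r * p) + of_real q * a)"
        by (simp only: a_pow[OF aa, of k] p_def q_def)
      also have "\<dots> = lin a (c*r^2*p) (1 - c*r*q)" by (simp add: lin_def algebra_simps power2_eq_square)
      finally show ?thesis .
    qed
    have rp: "r * p \<ge> - (r^2)"
    proof -
      have "r * (-r) \<le> r * p" using bp r0 by (intro mult_left_mono) auto
      then show ?thesis by (simp add: power2_eq_square)
    qed
    have rq: "r * q \<ge> - (r^2)"
    proof -
      have "r * (-r) \<le> r * q" using bq r0 by (intro mult_left_mono) auto
      then show ?thesis by (simp add: power2_eq_square)
    qed
    show ?thesis
    proof (cases "q - r*p \<le> 1 - r")
      case True
      show ?thesis
      proof (rule tri_lin[OF z0V z1V wV refl refl refl teq, of "1 + r*q" "(1-r^2)*(1-r+r*p-q)" "(1-r^2)*(q-r*p+r)" "r*(q+r)"])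
        show "0 < 1 + r*q" using rq rr by linarith
        show "0 \<le> (1-r^2)*(1-r+r*p-q)" using True rr by simp
        show "0 \<le> (1-r^2)*(q-r*p+r)" using bg rr by simp
        show "0 \<le> r*(q+r)" using bq r0 by simp
        show "(1-r^2)*(1-r+r*p-q) + (1-r^2)*(q-r*p+r) + r*(q+r) = 1 + r*q"
          by (simp add: algebra_simps power2_eq_square)
        show "(1 + r * q) * (c * r\<^sup>2 * p) = (1 - r\<^sup>2) * (1 - r + r * p - q) * 0 + (1 - r\<^sup>2) * (q - r * p + r) * (- c * r) + r * (q + r) * (1 + c * r\<^sup>2 * p)"
          using cne by algebra
        show "(1 + r * q) * (1 - c * r * q) = (1 - r\<^sup>2) * (1 - r + r * p - q) * c + (1 - r\<^sup>2) * (q - r * p + r) * c + r * (q + r) * (- c * r * q)"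
          using cne by algebra
      qed
    next
      case False
      show ?thesis
      proof (rule tri_lin[OF z1V z2V wV refl refl refl teq, of "r^2*p + 1 + r - r^2" "(1-r^2)*(r*p-q+2-r)" "(1-r^2)*(q-r*p-1+r)" "r*(r*p+1)"])
        have "r^2 * p \<ge> - (r^2) * r"
        proof -
          have "r^2 * (-r) \<le> r^2 * p" using bp by (intro mult_left_mono) auto
          then show ?thesis by simp
        qed
        moreover have "(1 - r^2) * (1 + r) > 0" using rr r0 by simp
        ultimately show "0 < r^2*p + 1 + r - r^2" by (simp add: algebra_simps)
        show "0 \<le> (1-r^2)*(r*p-q+2-r)" using bg rr by simp
        show "0 \<le> (1-r^2)*(q-r*p-1+r)" using False rr by simp
        show "0 \<le> r*(r*p+1)" using rp rr r0 by simp
        show "(1-r^2)*(r*p-q+2-r) + (1-r^2)*(q-r*p-1+r) + r*(r*p+1) = r^2*p + 1 + r - r^2"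
          by (simp add: algebra_simps power2_eq_square)
        show "(r\<^sup>2 * p + 1 + r - r\<^sup>2) * (c * r\<^sup>2 * p) = (1 - r\<^sup>2) * (r * p - q + 2 - r) * (- c * r) + (1 - r\<^sup>2) * (q - r * p - 1 + r) * (- c * r) + r * (r * p + 1) * (1 + c * r\<^sup>2 * p)"
          using cne by algebra
        show "(r\<^sup>2 * p + 1 + r - r\<^sup>2) * (1 - c * r * q) = (1 - r\<^sup>2) * (r * p - q + 2 - r) * c + (1 - r\<^sup>2) * (q - r * p - 1 + r) * (c * (1 - r)) + r * (r * p + 1) * (- c * r * q)"
          using cne by algebra
      qed
    qed
  qed
  have vcases: "v = a + of_real (c*r^2) \<or> (\<exists>k. v = of_real c * a^(k+1)) \<or> (\<exists>k\<ge>1. v = 1 - of_real (c*r) * a^k)"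
    if "v \<in> V" for v using that hV by auto
  have F1: "(\<lambda>z. a * z) ` (convex hull V) \<subseteq> convex hull V"
  proof (rule affine_hull_inv)
    fix x y and u v :: real assume "u + v = 1"
    show "a * (u *\<^sub>R x + v *\<^sub>R y) = u *\<^sub>R (a * x) + v *\<^sub>R (a * y)"
      by (simp add: scaleR_conv_of_real algebra_simps)
  next
    fix v assume "v \<in> V"
    then consider "v = a + of_real (c*r^2)" | k where "v = of_real c * a^(k+1)"
      | k where "k \<ge> 1" "v = 1 - of_real (c*r) * a^k" using vcases by blast
    then show "a * v \<in> convex hull V"
    proof cases
      case 1
      show ?thesis
      proof (rule tri_lin[OF z1V z0V z0V refl refl refl, of _ "-r" "1 + c*r^2" 1 "1-r^2" "r^2" 0])
        have "a * v = a * a + of_real (c*r^2) * a" using 1 by (simp add: algebra_simps)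
        also have "\<dots> = (a - of_real r) + of_real (c*r^2) * a" by (simp only: aa)
        also have "\<dots> = lin a (-r) (1 + c*r^2)" by (simp add: lin_def algebra_simps)
        finally show "a * v = lin a (-r) (1 + c*r^2)" .
        show "(0::real) < 1" "0 \<le> 1 - r^2" "0 \<le> r^2" "(0::real) \<le> 0" "1 - r^2 + r^2 + 0 = 1"
          using rr by auto
        show "1 * - r = (1 - r\<^sup>2) * (- c * r) + r\<^sup>2 * 0 + 0 * 0" using cne by algebra
        show "1 * (1 + c * r\<^sup>2) = (1 - r\<^sup>2) * c + r\<^sup>2 * c + 0 * c" using cne by algebra
      qed
    next
      case (2 k)
      have eq: "a * v = of_real c * a^((k+1)+1)" using 2 by (simp add: algebra_simps)
      show ?thesis unfolding eq by (rule hm[OF zin[of "k+1"]])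
    next
      case (3 k)
      then show ?thesis using tH[OF 3(1)] by simp
    qed
  qed
  have F2: "(\<lambda>z. 1 - cnj a * z) ` (convex hull V) \<subseteq> convex hull V"
  proof (rule affine_hull_inv)
    fix x y and u v :: real assume uv: "u + v = 1"
    have e: "(of_real u :: complex) = 1 - of_real v" using uv by (metis add_diff_cancel_right' of_real_1 of_real_add)
    show "1 - cnj a * (u *\<^sub>R x + v *\<^sub>R y) = u *\<^sub>R (1 - cnj a * x) + v *\<^sub>R (1 - cnj a * y)"
      by (simp add: scaleR_conv_of_real e algebra_simps)
  next
    fix v assume "v \<in> V"
    then consider "v = a + of_real (c*r^2)" | k where "v = of_real c * a^(k+1)"
      | k where "k \<ge> 1" "v = 1 - of_real (c*r) * a^k" using vcases by blast
    then show "1 - cnj a * v \<in> convex hull V"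
    proof cases
      case 1
      show ?thesis
      proof (rule tri_lin[OF w2V z1V z2V refl refl refl, of _ "1 - r - c*r^2" "c*r^2" "1+r" "(1-r)*(1+r-r^2)" "2*r^2" "r*(1-r)*(1+r)"])
        have "1 - cnj a * v = 1 - cnj a * a - of_real (c*r^2) * cnj a" using 1 by (simp add: algebra_simps)
        also have "\<dots> = 1 - of_real r - of_real (c*r^2) * (1 - a)" by (simp only: ca, simp only: ha)
        also have "\<dots> = lin a (1 - r - c*r^2) (c*r^2)" by (simp add: lin_def algebra_simps)
        finally show "1 - cnj a * v = lin a (1 - r - c*r^2) (c*r^2)" .
        have "0 \<le> 1 + r - r^2" using rr r0 by simp
        then show "0 < 1 + r" "0 \<le> (1-r)*(1+r-r^2)" "0 \<le> 2*r^2" "0 \<le> r*(1-r)*(1+r)"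
          using r0 r1 by auto
        show "(1 - r) * (1 + r - r\<^sup>2) + 2 * r\<^sup>2 + r * (1 - r) * (1 + r) = 1 + r"
          by (simp add: algebra_simps power2_eq_square)
        show "(1 + r) * (1 - r - c * r\<^sup>2) = (1 - r) * (1 + r - r\<^sup>2) * (1 + c * r\<^sup>2) + 2 * r\<^sup>2 * (- c * r) + r * (1 - r) * (1 + r) * (- c * r)"
          using cne by algebra
        show "(1 + r) * (c * r\<^sup>2) = (1 - r) * (1 + r - r\<^sup>2) * (- c * r) + 2 * r\<^sup>2 * c + r * (1 - r) * (1 + r) * (c * (1 - r))"
          by (simp add: power2_eq_square algebra_simps)
      qed
    next
      case (2 k)
      have e: "1 - cnj a * v = 1 - of_real (c*r) * a^k"
      proof -
        have "1 - cnj a * v = 1 - of_real c * (cnj a * a) * a^k" using 2 by (simp add: algebra_simps)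
        also have "\<dots> = 1 - of_real (c*r) * a^k" by (simp add: ca)
        finally show ?thesis .
      qed
      show ?thesis
      proof (cases "k = 0")
        case True
        then show ?thesis using e w0H by simp
      next
        case False
        then show ?thesis using e hm[OF win[of k]] by simp
      qed
    next
      case (3 k)
      then obtain j where kj: "k = Suc j" by (cases k) auto
      have e: "1 - cnj a * v = a + of_real (c*r^2) * a^j"
      proof -
        have "1 - cnj a * v = (1 - cnj a) + of_real (c*r) * (cnj a * a) * a^j"
          unfolding 3(2) kj by (simp add: algebra_simps)
        also have "\<dots> = (1 - cnj a) + of_real (c*r) * of_real r * a^j" by (simp only: ca)
        also have "\<dots> = a + of_real (c*r^2) * a^j" by (simp add: ha power2_eq_square)
        finally show ?thesis .
      qed
      show ?thesis
      proof (cases j)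
        case 0
        then show ?thesis using e hm[OF bin] by simp
      next
        case (Suc i)
        have "1 *\<^sub>R (1 - cnj a * v) = (1 - r^2) *\<^sub>R (of_real c * a^(0+1)) + r^2 *\<^sub>R (of_real c * a^(i+1))
            + 0 *\<^sub>R (of_real c * a^(i+1))"
        proof -
          have "(1 - r^2) *\<^sub>R (of_real c * a^(0+1)) = of_real (c * (1 - r^2)) * a"
            by (simp add: scaleR_conv_of_real algebra_simps)
          also have "\<dots> = a" using cne by simp
          finally have h1: "(1 - r^2) *\<^sub>R (of_real c * a^(0+1)) = a" .
          have h2: "r^2 *\<^sub>R (of_real c * a^(i+1)) = of_real (c*r^2) * a^j"
            using Suc by (simp add: scaleR_conv_of_real algebra_simps)
          show ?thesis using e h1 h2 by simp
        qed
        then show ?thesis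
          by (rule tri_den[OF zin[of 0] zin[of i] zin[of i], of 1 "1 - r^2" "r^2" 0, rotated -1])
            (use rr in auto)
      qed
    qed
  qed
  show ?thesis using F1 F2 by blast
qed


theorem lemma3p3:
  fixes \<eta> :: real
  assumes "0 < \<eta>" and "\<eta> < pi / 3"
  shows "f1 \<eta> ` (convex hull (Vset \<eta>)) \<union> f2 \<eta> ` (convex hull (Vset \<eta>))
           \<subseteq> convex hull (Vset \<eta>)"
proof -
  define a where "a = a_par \<eta>"
  define r where "r = cmod a ^ 2"
  define c where "c = c_par \<eta>"
  have cgt: "1/2 < cos \<eta>"
  proof -
    have "cos (pi/3) < cos \<eta>" using assms by (subst cos_mono_less_eq) auto
    then show ?thesis by (simp add: cos_60)
  qed
  have cpos: "0 < cos \<eta>" using cgt by simp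
  have ea: "exp (- (\<i> * complex_of_real \<eta>)) = cis (- \<eta>)"
    by (simp add: cis_conv_exp)
  have aeq: "a = cis (- \<eta>) / complex_of_real (2 * cos \<eta>)"
    by (simp add: a_def a_par_def ea)
  have Rea: "Re a = 1/2" using cpos by (simp add: aeq)
  have ha: "cnj a = 1 - a" using Rea by (simp add: complex_eq_iff)
  have hr: "a * cnj a = of_real r" unfolding r_def by (rule complex_norm_square[symmetric])
  have nrm: "cmod a = 1 / (2 * cos \<eta>)" using cpos by (simp add: aeq norm_divide)
  have r0: "0 < r" using cpos by (simp add: r_def nrm)
  have r1: "r < 1"
  proof -
    have "1 < 2 * cos \<eta>" using cgt by simp
    then have "cmod a < 1" using cpos by (simp add: nrm)
    moreover have "0 \<le> cmod a" by simp
    ultimately have "cmod a * cmod a < 1 * 1" by (intro mult_strict_mono') auto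
    then show ?thesis by (simp add: r_def power2_eq_square)
  qed
  have a4: "cmod a ^ 4 = r^2" by (simp add: r_def power_mult[symmetric])
  have hc: "c = 1 / (1 - r^2)" by (simp add: c_def c_par_def a4[symmetric] a_def)
  have hV: "Vset \<eta> = {a + of_real (c * r^2) * a^0} \<union> {of_real c * a^(k+1) | k. k \<ge> 0}
               \<union> {1 - of_real (c * r) * a^k | k. k \<ge> 1}"
    by (simp add: Vset_def bk_def zk_def wk_def a4 a_def[symmetric] c_def[symmetric] r_def[symmetric])
  have e1: "f1 \<eta> = (\<lambda>z. a * z)" by (rule ext) (simp add: f1_def a_def)
  have e2: "f2 \<eta> = (\<lambda>z. 1 - cnj a * z)" by (rule ext) (simp add: f2_def a_def)
  show ?thesis unfolding e1 e2 by (rule main_abstract[OF ha hr r0 r1 hc hV])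
qed

end
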